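(* There is an absolute constant $c>0$ such that for every integer $k\ge 2$, every strict subdivision of a graph of average degree at least $c\,k\log k$ contains, as an induced subgraph, a disjoint union of $k$ cycles (i.e., it is not $\mathcal{O}_k$-free).
   Context: All graphs are finite and simple. A strict subdivision of a graph $H$ is a graph obtained from $H$ by replacing each edge by a path with at least two edges (each edge is subdivided at least once), the new paths being internally disjoint. A graph $G$ is $\mathcal{O}_k$-free if it has no induced subgraph isomorphic to a disjoint union of $k$ cycles. *)

theory Defs
  imports Complex_Main
begin

definition simple_graph :: "'a set \<Rightarrow> 'a set set \<Rightarrow> bool" where
  "simple_graph V E \<longleftrightarrow> finite V \<and>
     (\<forall>e\<in>E. \<exists>u v. u \<noteq> v \<and> e = {u, v} \<and> u \<in> V \<and> v \<in> V)"

definition avg_degree :: "'a set \<Rightarrow> 'a set set \<Rightarrow> real" where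
  "avg_degree V E = 2 * real (card E) / real (card V)"

definition path_edges :: "'a list \<Rightarrow> 'a set set" where
  "path_edges p = {{p ! i, p ! Suc i} | i. Suc i < length p}"

definition interior :: "'a list \<Rightarrow> 'a set" where
  "interior p = set (butlast (tl p))"

definition strict_subdivision ::
  "'b set \<Rightarrow> 'b set set \<Rightarrow> 'a set \<Rightarrow> 'a set set \<Rightarrow> bool" where
  "strict_subdivision VG EG VH EH \<longleftrightarrow>
     (\<exists>f P. inj_on f VH \<and>
        (\<forall>e\<in>EH. distinct (P e) \<and> length (P e) \<ge> 3 \<and>
                 {hd (P e), last (P e)} = f ` e \<and>
                 interior (P e) \<inter> f ` VH = {}) \<and>
        (\<forall>e\<in>EH. \<forall>e'\<in>EH. e \<noteq> e' \<longrightarrow> interior (P e) \<inter> interior (P e') = {}) \<and>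
        VG = f ` VH \<union> (\<Union>e\<in>EH. interior (P e)) \<and>
        EG = (\<Union>e\<in>EH. path_edges (P e)))"

definition induced_cycle :: "'a set \<Rightarrow> 'a set set \<Rightarrow> 'a list \<Rightarrow> bool" where
  "induced_cycle V E c \<longleftrightarrow> distinct c \<and> length c \<ge> 3 \<and> set c \<subseteq> V \<and>
     {e \<in> E. e \<subseteq> set c} =
       {{c ! i, c ! (Suc i mod length c)} | i. i < length c}"

definition has_induced_k_cycles :: "nat \<Rightarrow> 'a set \<Rightarrow> 'a set set \<Rightarrow> bool" where
  "has_induced_k_cycles k V E \<longleftrightarrow>
     (\<exists>C :: nat \<Rightarrow> 'a list.
        (\<forall>i<k. induced_cycle V E (C i)) \<and>
        (\<forall>i<k. \<forall>j<k. i \<noteq> j \<longrightarrow>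
            set (C i) \<inter> set (C j) = {} \<and>
            (\<forall>u\<in>set (C i). \<forall>v\<in>set (C j). {u, v} \<notin> E)))"

definition O_free :: "nat \<Rightarrow> 'a set \<Rightarrow> 'a set set \<Rightarrow> bool" where
  "O_free k V E \<longleftrightarrow> \<not> has_induced_k_cycles k V E"

end

theory Submission
  imports Defs
begin


definition deg2 :: "'a set set \<Rightarrow> 'a set \<Rightarrow> bool" where
  "deg2 E T \<longleftrightarrow> (\<forall>x\<in>T. \<exists>y\<in>T. \<exists>z\<in>T. y \<noteq> z \<and> {x,y} \<in> E \<and> {x,z} \<in> E)"

definition wf2 :: "'a set set \<Rightarrow> bool" where
  "wf2 E \<longleftrightarrow> (\<forall>e\<in>E. \<exists>u v. u \<noteq> v \<and> e = {u,v})"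

definition ispath :: "'a set set \<Rightarrow> 'a set \<Rightarrow> 'a list \<Rightarrow> bool" where
  "ispath E T p \<longleftrightarrow> distinct p \<and> set p \<subseteq> T \<and> (\<forall>i. Suc i < length p \<longrightarrow> {p!i, p!Suc i} \<in> E)"

lemma wf2_irrefl: "wf2 E \<Longrightarrow> {x,x} \<notin> E"
  unfolding wf2_def by (auto simp: doubleton_eq_iff)

lemma closed_deg2:
  assumes d: "distinct q" and L: "3 \<le> length q"
    and c: "\<forall>i. Suc i < length q \<longrightarrow> {q!i, q!Suc i} \<in> E"
    and cl: "{q!(length q - 1), q!0} \<in> E"
  shows "deg2 E (set q)"
  unfolding deg2_def
proof
  fix x assume "x \<in> set q"
  then obtain i where i: "i < length q" "x = q!i" by (auto simp: in_set_conv_nth)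
  have mem: "\<And>j. j < length q \<Longrightarrow> q!j \<in> set q" by simp
  have ne: "\<And>a b. a < length q \<Longrightarrow> b < length q \<Longrightarrow> a \<noteq> b \<Longrightarrow> q!a \<noteq> q!b"
    using d by (simp add: nth_eq_iff_index_eq)
  show "\<exists>y\<in>set q. \<exists>z\<in>set q. y \<noteq> z \<and> {x,y} \<in> E \<and> {x,z} \<in> E"
  proof (cases "i = 0")
    case True
    have "q!1 \<noteq> q!(length q - 1)" using L by (intro ne) auto
    moreover have "{x, q!1} \<in> E" using c[rule_format, of 0] L i True by simp
    moreover have "{x, q!(length q - 1)} \<in> E" using cl i True by (simp add: insert_commute)
    moreover have "q!1 \<in> set q" "q!(length q - 1) \<in> set q" using L by (intro mem; simp)+
    ultimately show ?thesis by blast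
  next
    case False
    show ?thesis
    proof (cases "i = length q - 1")
      case True
      have "q!(i-1) \<noteq> q!0" using L i False True by (intro ne) auto
      moreover have "{x, q!(i-1)} \<in> E" using c[rule_format, of "i-1"] L i False
        by (simp add: insert_commute)
      moreover have "{x, q!0} \<in> E" using cl i True by simp
      moreover have "q!(i-1) \<in> set q" "q!0 \<in> set q" using L i by (intro mem; auto)+
      ultimately show ?thesis by blast
    next
      case F2: False
      have "q!(i-1) \<noteq> q!(i+1)" using L i False F2 by (intro ne) auto
      moreover have "{x, q!(i-1)} \<in> E" using c[rule_format, of "i-1"] L i False
        by (simp add: insert_commute)
      moreover have "{x, q!(i+1)} \<in> E" using c[rule_format, of i] i F2 by simp
      moreover have "q!(i-1) \<in> set q" "q!(i+1) \<in> set q" using L i F2 by (intro mem; simp)+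
      ultimately show ?thesis by blast
    qed
  qed
qed

lemma longest_path:
  assumes "finite T" "t \<in> T"
  shows "\<exists>p. ispath E T p \<and> p \<noteq> [] \<and> (\<forall>p'. ispath E T p' \<longrightarrow> length p' \<le> length p)"
proof -
  have P0: "ispath E T [t] \<and> [t] \<noteq> []" using assms by (simp add: ispath_def)
  have B: "\<forall>p. ispath E T p \<and> p \<noteq> [] \<longrightarrow> length p < card T + 1"
  proof (intro allI impI)
    fix p assume "ispath E T p \<and> p \<noteq> []"
    then have "distinct p" "set p \<subseteq> T" by (auto simp: ispath_def)
    then have "length p \<le> card T" using assms(1) by (metis card_mono distinct_card)
    then show "length p < card T + 1" by simp
  qed
  obtain p where p: "ispath E T p \<and> p \<noteq> []" "\<forall>y. ispath E T y \<and> y \<noteq> [] \<longrightarrow> length y \<le> length p"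
    using Lattices_Big.ex_has_greatest_nat[OF P0 B] by blast
  have "\<forall>p'. ispath E T p' \<longrightarrow> length p' \<le> length p"
  proof (intro allI impI)
    fix p' assume "ispath E T p'"
    then show "length p' \<le> length p" using p by (cases "p' = []") auto
  qed
  then show ?thesis using p by blast
qed

lemma seg:
  assumes p: "ispath E T p" and ab: "a \<le> b" "b < length p"
  defines "s \<equiv> map (nth p) [a..<Suc b]"
  shows "distinct s" "length s = Suc b - a" "set s \<subseteq> set p"
    "\<forall>i. Suc i < length s \<longrightarrow> {s!i, s!Suc i} \<in> E"
    "s!0 = p!a" "s!(length s - 1) = p!b"
proof -
  have d: "distinct p" and c: "\<forall>i. Suc i < length p \<longrightarrow> {p!i, p!Suc i} \<in> E"
    using p by (auto simp: ispath_def)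
  show ls: "length s = Suc b - a" unfolding s_def by (simp del: upt_Suc)
  have sn: "\<And>i. i < length s \<Longrightarrow> s!i = p!(a+i)" unfolding s_def
    by (simp del: upt_Suc)
  show "distinct s" unfolding s_def
    using d ab by (auto simp: distinct_map inj_on_def nth_eq_iff_index_eq simp del: upt_Suc)
  show "set s \<subseteq> set p" unfolding s_def using ab by (auto simp del: upt_Suc)
  show "\<forall>i. Suc i < length s \<longrightarrow> {s!i, s!Suc i} \<in> E"
  proof (intro allI impI)
    fix i assume i: "Suc i < length s"
    then have "s!i = p!(a+i)" "s!Suc i = p!Suc (a+i)" "Suc (a+i) < length p"
      using sn ls ab by auto
    then show "{s!i, s!Suc i} \<in> E" using c by simp
  qed
  show "s!0 = p!a" using sn[of 0] ls ab by simp
  show "s!(length s - 1) = p!b" using sn ls ab by simp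
qed

lemma gen_cycle:
  assumes wf: "wf2 E" and fin: "finite U" and UV: "U \<subseteq> V"
    and T: "T \<subseteq> U" "T \<noteq> {}" "deg2 E T"
  shows "\<exists>p. induced_cycle V E p \<and> set p \<subseteq> U \<and> deg2 E (set p) \<and>
           (\<forall>w\<in>U - set p. card {y\<in>set p. {w,y}\<in>E} \<le> 3)"
proof -
  define good where "good S \<longleftrightarrow> S \<subseteq> U \<and> S \<noteq> {} \<and> deg2 E S" for S
  have "good T" using T by (simp add: good_def)
  then obtain T0 where T0: "good T0" and minT: "\<And>S. good S \<Longrightarrow> card T0 \<le> card S"
    using ex_has_least_nat[of good T card, OF \<open>good T\<close>] by blast
  have finT0: "finite T0" using T0 fin unfolding good_def by (meson finite_subset)
  have M: "card T0 \<le> length q" if "distinct q" "3 \<le> length q" "set q \<subseteq> U"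
      "\<forall>i. Suc i < length q \<longrightarrow> {q!i, q!Suc i} \<in> E" "{q!(length q - 1), q!0} \<in> E" for q
  proof -
    have "deg2 E (set q)" using closed_deg2[OF that(1,2,4,5)] .
    moreover have "set q \<noteq> {}" using that(2) by auto
    ultimately have "good (set q)" using that(3) by (simp add: good_def)
    then have "card T0 \<le> card (set q)" by (rule minT)
    then show ?thesis using distinct_card[OF that(1)] by simp
  qed
  have "T0 \<noteq> {}" using T0 unfolding good_def by blast
  then obtain t where "t \<in> T0" by blast
  from longest_path[OF finT0 this, where E=E] obtain p where p: "ispath E T0 p" "p \<noteq> []"
    and long0: "\<forall>p'. ispath E T0 p' \<longrightarrow> length p' \<le> length p" by blast
  have long: "\<And>p'. ispath E T0 p' \<Longrightarrow> length p' \<le> length p" using long0 by blast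
  have dp: "distinct p" and pT0: "set p \<subseteq> T0" and cp: "\<forall>i. Suc i < length p \<longrightarrow> {p!i, p!Suc i} \<in> E"
    using p(1) unfolding ispath_def by blast+
  have T0U: "T0 \<subseteq> U" using T0 by (simp add: good_def)
  have irr: "\<And>x. {x,x} \<notin> E" using wf by (rule wf2_irrefl)
  have nbin: "y \<in> set p" if "y \<in> T0" "{p!0, y} \<in> E" for y
  proof (rule ccontr)
    assume "y \<notin> set p"
    have "ispath E T0 (y#p)" unfolding ispath_def
    proof (intro conjI allI impI)
      show "distinct (y#p)" using dp \<open>y \<notin> set p\<close> by simp
      show "set (y#p) \<subseteq> T0" using pT0 that by simp
      fix i assume "Suc i < length (y#p)"
      then show "{(y#p)!i, (y#p)!Suc i} \<in> E" using cp that(2)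
        by (cases i) (auto simp: insert_commute)
    qed
    then have "length (y#p) \<le> length p" by (rule long)
    then show False by simp
  qed
  have "p!0 \<in> T0" using p pT0 by (metis nth_mem length_greater_0_conv subsetD)
  then obtain y z where yz: "y \<in> T0" "z \<in> T0" "y \<noteq> z" "{p!0,y} \<in> E" "{p!0,z} \<in> E"
    using T0 unfolding good_def deg2_def by blast
  obtain a where a: "a < length p" "y = p!a" using nbin yz by (auto simp: in_set_conv_nth)
  obtain b where b: "b < length p" "z = p!b" using nbin yz by (auto simp: in_set_conv_nth)
  have "a \<noteq> 0" using a(2) yz(4) irr[of "p!0"] by (cases "a = 0") auto
  moreover have "b \<noteq> 0" using b(2) yz(5) irr[of "p!0"] by (cases "b = 0") auto
  moreover have "a \<noteq> b" using a b yz by auto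
  ultimately obtain j where j: "2 \<le> j" "j < length p" "{p!j, p!0} \<in> E"
  proof -
    assume that: "\<And>j. 2 \<le> j \<Longrightarrow> j < length p \<Longrightarrow> {p!j, p!0} \<in> E \<Longrightarrow> thesis"
    have "2 \<le> a \<or> 2 \<le> b" using \<open>a \<noteq> 0\<close> \<open>b \<noteq> 0\<close> \<open>a \<noteq> b\<close> by linarith
    moreover have "{p!a, p!0} \<in> E" "{p!b, p!0} \<in> E" using a b yz by (simp_all add: insert_commute)
    ultimately show ?thesis using that a(1) b(1) by blast
  qed
  define L where "L = length p"
  have "card T0 \<le> Suc j"
  proof -
    define s where "s = map (nth p) [0..<Suc j]"
    note S = seg[OF p(1), of 0 j, folded s_def]
    have "card T0 \<le> length s"
      apply (rule M)
      using S j T0U pT0 by auto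
    then show ?thesis using S j by simp
  qed
  moreover have "length p \<le> card T0" using pT0 dp finT0 by (metis card_mono distinct_card)
  ultimately have jL: "j = L - 1" using j L_def by linarith
  have "card T0 \<le> card (set p)" using \<open>card T0 \<le> Suc j\<close> jL L_def j(2) distinct_card[OF dp] by simp
  then have T0p: "T0 = set p" using pT0 finT0 by (metis card_seteq)
  have L3: "3 \<le> L" using j jL by linarith
  have cl: "{p!(L-1), p!0} \<in> E" using j jL by simp
  have MinL: "L \<le> length q" if "distinct q" "3 \<le> length q" "set q \<subseteq> U"
      "\<forall>i. Suc i < length q \<longrightarrow> {q!i, q!Suc i} \<in> E" "{q!(length q - 1), q!0} \<in> E" for q
    using M[OF that] T0p dp L_def by (simp add: distinct_card)
  have chord: "b = Suc a \<or> (a = 0 \<and> b = L - 1)" if ab: "a < b" "b < L" "{p!a, p!b} \<in> E" for a b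
  proof (rule ccontr)
    assume nc: "\<not> (b = Suc a \<or> (a = 0 \<and> b = L - 1))"
    define s where "s = map (nth p) [a..<Suc b]"
    note S = seg[OF p(1), of a b, folded s_def]
    have bp: "b < length p" using ab L_def by simp
    have "L \<le> length s"
    proof (rule MinL)
      show "distinct s" using S(1) bp ab by simp
      have "length s = Suc b - a" using S(2) bp ab by simp
      moreover have "b \<noteq> Suc a" using nc by blast
      ultimately show "3 \<le> length s" using ab by linarith
      show "set s \<subseteq> U" using S(3) bp ab pT0 T0U by auto
      show "\<forall>i. Suc i < length s \<longrightarrow> {s!i, s!Suc i} \<in> E" using S(4) bp ab by simp
      have "s ! (length s - 1) = p!b" "s!0 = p!a" using S(5,6) bp ab by auto
      then show "{s ! (length s - 1), s ! 0} \<in> E" using ab(3) by (simp add: insert_commute)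
    qed
    moreover have "length s = Suc b - a" using S(2) ab L_def by simp
    ultimately have "L \<le> Suc b - a" by simp
    then have "a = 0 \<and> b = L - 1" using ab by linarith
    then show False using nc by blast
  qed
  have Lp: "L = length p" by (simp add: L_def)
  have ind: "induced_cycle V E p"
    unfolding induced_cycle_def
  proof (intro conjI)
    show "distinct p" by (rule dp)
    show "3 \<le> length p" using L3 L_def by simp
    show "set p \<subseteq> V" using pT0 T0U UV by auto
    have key: "\<exists>i<L. e = {p ! i, p ! (Suc i mod L)}"
      if kk: "a' < b'" "b' < L" "e = {p!a', p!b'}" "e \<in> E" for a' b' e
    proof -
      have "{p!a', p!b'} \<in> E" using kk by simp
      then have "b' = Suc a' \<or> (a' = 0 \<and> b' = L - 1)" using chord kk(1,2) by blast
      then show ?thesis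
      proof
        assume h: "b' = Suc a'"
        then have "Suc a' mod L = b'" using kk(2) by simp
        then have "e = {p ! a', p ! (Suc a' mod L)}" using kk(3) by simp
        moreover have "a' < L" using kk by simp
        ultimately show ?thesis by blast
      next
        assume h: "a' = 0 \<and> b' = L - 1"
        then have m: "Suc (L - 1) mod L = a'" using L3 by simp
        have "e = {p ! (L - 1), p ! (Suc (L - 1) mod L)}" unfolding m using kk(3) h
          by (simp add: insert_commute)
        moreover have "L - 1 < L" using L3 by simp
        ultimately show ?thesis by blast
      qed
    qed
    show "{e \<in> E. e \<subseteq> set p} = {{p ! i, p ! (Suc i mod length p)} |i. i < length p}"
    proof
      show "{e \<in> E. e \<subseteq> set p} \<subseteq> {{p ! i, p ! (Suc i mod length p)} |i. i < length p}"
      proof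
        fix e assume e: "e \<in> {e \<in> E. e \<subseteq> set p}"
        then have eE: "e \<in> E" and es: "e \<subseteq> set p" by auto
        then obtain x y where xy: "x \<noteq> y" "e = {x,y}" using wf unfolding wf2_def by blast
        have "x \<in> set p" "y \<in> set p" using es xy by auto
        then obtain a b where a: "a < L" "x = p!a" and b: "b < L" "y = p!b"
          unfolding Lp by (metis in_set_conv_nth)
        have "a \<noteq> b" using a b xy by auto
        then have "\<exists>i<L. e = {p ! i, p ! (Suc i mod L)}"
        proof (cases "a < b")
          case True then show ?thesis using key[of a b e] a b xy eE by simp
        next
          case False then have "b < a" using \<open>a \<noteq> b\<close> by simp
          moreover have "e = {p!b, p!a}" using a b xy by (simp add: insert_commute)
          ultimately show ?thesis using key[of b a e] a b eE by simp
        qed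
        then show "e \<in> {{p ! i, p ! (Suc i mod length p)} |i. i < length p}" unfolding Lp by blast
      qed
    next
      show "{{p ! i, p ! (Suc i mod length p)} |i. i < length p} \<subseteq> {e \<in> E. e \<subseteq> set p}"
      proof
        fix e assume "e \<in> {{p ! i, p ! (Suc i mod length p)} |i. i < length p}"
        then obtain i where i: "i < L" "e = {p ! i, p ! (Suc i mod L)}" unfolding Lp by blast
        have "e \<in> E"
        proof (cases "Suc i < L")
          case True then have "Suc i mod L = Suc i" by simp
          then show ?thesis using i cp True unfolding Lp by simp
        next
          case False then have iL: "i = L - 1" "Suc i = L" using i by auto
          then have "Suc i mod L = 0" by simp
          note iL = iL this
          then show ?thesis using i cl iL by simp
        qed
        moreover have "Suc i mod L < L" using L3 by simp
        then have "e \<subseteq> set p" using i unfolding Lp by simp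
        ultimately show "e \<in> {e \<in> E. e \<subseteq> set p}" by simp
      qed
    qed
  qed
  have outside: "card {y\<in>set p. {w,y}\<in>E} \<le> 3" if w: "w \<in> U - set p" for w
  proof -
    define N where "N = {i. i < L \<and> {w, p!i} \<in> E}"
    have finN: "finite N" unfolding N_def by simp
    have "{y\<in>set p. {w,y}\<in>E} \<subseteq> (nth p) ` N" unfolding N_def Lp
      by (auto simp: in_set_conv_nth)
    then have c1: "card {y\<in>set p. {w,y}\<in>E} \<le> card N"
      by (meson card_image_le card_mono finN finite_imageI order.trans)
    have gap: "L \<le> b - a + 2" if ab: "a \<in> N" "b \<in> N" "a < b" for a b
    proof -
      define s where "s = map (nth p) [a..<Suc b]"
      have bL: "b < length p" using ab unfolding Lp N_def by simp
      note S = seg[OF p(1), of a b, folded s_def]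
      have ls: "length s = Suc b - a" using S(2) bL ab by simp
      have s0: "s!0 = p!a" and sl: "s!(length s - 1) = p!b" using S(5,6) bL ab by auto
      have wa: "{w, p!a} \<in> E" and wb: "{w, p!b} \<in> E" using ab unfolding N_def by auto
      have "L \<le> length (w#s)"
      proof (rule MinL)
        have "w \<notin> set s" using S(3) bL ab w by auto
        then show "distinct (w#s)" using S(1) bL ab by simp
        show "3 \<le> length (w#s)" using ls ab by simp
        show "set (w#s) \<subseteq> U" using S(3) bL ab w pT0 T0U by auto
        show "\<forall>i. Suc i < length (w # s) \<longrightarrow> {(w # s) ! i, (w # s) ! Suc i} \<in> E"
        proof (intro allI impI)
          fix i assume i: "Suc i < length (w#s)"
          show "{(w # s) ! i, (w # s) ! Suc i} \<in> E"
          proof (cases i)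
            case 0 then show ?thesis using s0 wa by simp
          next
            case (Suc k) then show ?thesis using S(4) bL ab i by simp
          qed
        qed
        have "length s \<noteq> 0" using ls ab by simp
        then have "(w#s) ! (length (w#s) - 1) = s!(length s - 1)" by (cases "length s") auto
        then show "{(w # s) ! (length (w # s) - 1), (w # s) ! 0} \<in> E"
          using sl wb by (simp add: insert_commute)
      qed
      then show ?thesis using ls ab by simp
    qed
    have "card N \<le> 3"
    proof (rule ccontr)
      assume "\<not> card N \<le> 3"
      then have cN: "card N \<ge> 4" by simp
      then have Nne: "N \<noteq> {}" by auto
      define a where "a = Min N"
      define d where "d = Max N"
      have "N \<subseteq> (N - {a,d}) \<union> {a,d}" by blast
      then have "card N \<le> card ((N - {a,d}) \<union> {a,d})" using finN by (intro card_mono) auto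
      also have "\<dots> \<le> card (N - {a,d}) + card {a,d}" by (rule card_Un_le)
      also have "card {a,d} \<le> 2" by (simp add: card_insert_if)
      finally have "card (N - {a,d}) \<ge> 2" using cN by linarith
      then have "N - {a,d} \<noteq> {}" by (metis card.empty not_numeral_le_zero)
      then obtain b where b: "b \<in> N" "b \<noteq> a" "b \<noteq> d" by blast
      have aN: "a \<in> N" and dN: "d \<in> N" using Nne finN a_def d_def by auto
      have "a \<le> b" "b \<le> d" using b finN a_def d_def by auto
      then have ab: "a < b" "b < d" using b by auto
      have "L \<le> b - a + 2" using gap[OF aN b(1) ab(1)] .
      moreover have "L \<le> d - b + 2" using gap[OF b(1) dN ab(2)] .
      moreover have "d < L" using dN unfolding N_def by simp
      ultimately have "L \<le> 3" using ab by linarith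
      moreover have "N \<subseteq> {..<L}" unfolding N_def by auto
      then have "card N \<le> L" by (metis card_lessThan card_mono finite_lessThan)
      ultimately show False using cN by simp
    qed
    then show ?thesis using c1 by simp
  qed
  have "deg2 E (set p)" using T0 T0p by (simp add: good_def)
  then show ?thesis using ind outside pT0 T0U by blast
qed



lemma peel:
  assumes wf: "wf2 E"
  shows "finite W \<Longrightarrow> W \<noteq> {} \<Longrightarrow> card W \<le> card {e\<in>E. e \<subseteq> W} \<Longrightarrow> \<exists>T\<subseteq>W. T \<noteq> {} \<and> deg2 E T"
proof (induction "card W" arbitrary: W rule: less_induct)
  case less
  show ?case
  proof (cases "deg2 E W")
    case True then show ?thesis using less(3) by blast
  next
    case False
    define Q where "Q x \<longleftrightarrow> (\<exists>y\<in>W. \<exists>z\<in>W. y \<noteq> z \<and> {x,y} \<in> E \<and> {x,z} \<in> E)" for x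
    have "deg2 E W = (\<forall>x\<in>W. Q x)" unfolding deg2_def Q_def ..
    then obtain x where x: "x \<in> W" and nQ: "\<not> Q x" using False by blast
    have nx: "\<not> (\<exists>y\<in>W. \<exists>z\<in>W. y \<noteq> z \<and> {x,y} \<in> E \<and> {x,z} \<in> E)"
      using nQ unfolding Q_def .
    define Nx where "Nx = {y\<in>W. {x,y} \<in> E}"
    have finNx: "finite Nx" unfolding Nx_def using less by simp
    have "\<forall>a\<in>Nx. \<forall>b\<in>Nx. a = b"
    proof (intro ballI)
      fix a b assume ab: "a \<in> Nx" "b \<in> Nx"
      show "a = b"
      proof (rule ccontr)
        assume "a \<noteq> b"
        moreover have "a \<in> W" "b \<in> W" "{x,a} \<in> E" "{x,b} \<in> E" using ab unfolding Nx_def by simp_all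
        ultimately show False using nx by metis
      qed
    qed
    then have "card Nx \<le> Suc 0" using card_le_Suc0_iff_eq[OF finNx] by simp
    have sub: "{e\<in>E. e \<subseteq> W \<and> x \<in> e} \<subseteq> (\<lambda>y. {x,y}) ` Nx"
    proof
      fix e assume e: "e \<in> {e\<in>E. e \<subseteq> W \<and> x \<in> e}"
      then have eE: "e \<in> E" by simp
      then obtain u v where uv: "u \<noteq> v" "e = {u,v}" using wf unfolding wf2_def by blast
      show "e \<in> (\<lambda>y. {x,y}) ` Nx"
      proof (cases "x = u")
        case True then show ?thesis using e uv unfolding Nx_def by auto
      next
        case False then have "x = v" using e uv by auto
        then show ?thesis using e uv unfolding Nx_def by (auto simp: insert_commute)
      qed
    qed
    have c1: "card {e\<in>E. e \<subseteq> W \<and> x \<in> e} \<le> 1"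
      using card_mono[OF finite_imageI[OF finNx] sub] card_image_le[OF finNx, of "\<lambda>y. {x,y}"]
        \<open>card Nx \<le> Suc 0\<close> by linarith
    define W' where "W' = W - {x}"
    have "{e\<in>E. e \<subseteq> W} \<subseteq> {e\<in>E. e \<subseteq> W'} \<union> {e\<in>E. e \<subseteq> W \<and> x \<in> e}" unfolding W'_def by blast
    moreover have finP: "finite (Pow W)" using less(2) by simp
    have finE: "finite {e\<in>E. e \<subseteq> W'}" "finite {e\<in>E. e \<subseteq> W \<and> x \<in> e}"
      by (rule finite_subset[OF _ finP], unfold W'_def, blast)
        (rule finite_subset[OF _ finP], blast)
    ultimately have "card {e\<in>E. e \<subseteq> W} \<le> card ({e\<in>E. e \<subseteq> W'} \<union> {e\<in>E. e \<subseteq> W \<and> x \<in> e})"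
      by (intro card_mono finite_UnI finE)
    also have "\<dots> \<le> card {e\<in>E. e \<subseteq> W'} + card {e\<in>E. e \<subseteq> W \<and> x \<in> e}" by (rule card_Un_le)
    finally have "card {e\<in>E. e \<subseteq> W} \<le> card {e\<in>E. e \<subseteq> W'} + card {e\<in>E. e \<subseteq> W \<and> x \<in> e}" .
    then have cW': "card {e\<in>E. e \<subseteq> W} \<le> card {e\<in>E. e \<subseteq> W'} + 1" using c1 by linarith
    have cardW': "card W' = card W - 1" unfolding W'_def using x less(2) by simp
    have "W' \<noteq> {}"
    proof
      assume "W' = {}"
      then have Wx: "W = {x}" using x unfolding W'_def by blast
      have "{e\<in>E. e \<subseteq> W} = {}"
      proof (rule ccontr)
        assume "{e\<in>E. e \<subseteq> W} \<noteq> {}"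
        then obtain e where "e \<in> E" "e \<subseteq> {x}" using Wx by blast
        then obtain u v where "u \<noteq> v" "e = {u,v}" using wf unfolding wf2_def by blast
        then show False using \<open>e \<subseteq> {x}\<close> by blast
      qed
      then have c0: "card {e\<in>E. e \<subseteq> W} = 0" by (simp only: card.empty)
      have "card W = 1" using Wx by simp
      then show False using less(4) c0 by linarith
    qed
    have "finite W'" using less(2) unfolding W'_def by simp
    have "card W > 0" using less(2) x card_gt_0_iff by blast
    then have "card W' < card W" using cardW' by simp
    note this \<open>finite W'\<close>
    moreover have "card W' \<le> card {e\<in>E. e \<subseteq> W'}" using cW' cardW' less(4) by linarith
    ultimately have "\<exists>T\<subseteq>W'. T \<noteq> {} \<and> deg2 E T" using less(1) \<open>W' \<noteq> {}\<close> by simp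
    then obtain T where "T \<subseteq> W'" "T \<noteq> {}" "deg2 E T" by blast
    then show ?thesis unfolding W'_def by blast
  qed
qed



lemma interior_conv:
  assumes "2 \<le> length p"
  shows "x \<in> interior p \<longleftrightarrow> (\<exists>i. 0 < i \<and> Suc i < length p \<and> x = p!i)"
proof
  assume "x \<in> interior p"
  then obtain j where j: "j < length (butlast (tl p))" "x = butlast (tl p) ! j"
    unfolding interior_def by (metis in_set_conv_nth)
  then have "x = p ! Suc j" "Suc (Suc j) < length p" using assms by (auto simp: nth_butlast nth_tl)
  then show "\<exists>i. 0 < i \<and> Suc i < length p \<and> x = p!i" by (intro exI[of _ "Suc j"]) simp
next
  assume "\<exists>i. 0 < i \<and> Suc i < length p \<and> x = p!i"
  then obtain i where i: "0 < i" "Suc i < length p" "x = p!i" by blast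
  then obtain j where j: "i = Suc j" by (cases i) auto
  have "j < length (butlast (tl p))" using i j by simp
  moreover have "butlast (tl p) ! j = x" using i j by (simp add: nth_butlast nth_tl)
  ultimately show "x \<in> interior p" unfolding interior_def by (metis nth_mem)
qed

lemma set_hd_last_interior:
  assumes "2 \<le> length p"
  shows "set p = {hd p, last p} \<union> interior p"
proof
  show "set p \<subseteq> {hd p, last p} \<union> interior p"
  proof
    fix x assume "x \<in> set p"
    then obtain i where i: "i < length p" "x = p!i" by (metis in_set_conv_nth)
    have "p \<noteq> []" using assms by auto
    show "x \<in> {hd p, last p} \<union> interior p"
    proof (cases "i = 0")
      case True then show ?thesis using i \<open>p \<noteq> []\<close> by (simp add: hd_conv_nth)
    next
      case False
      show ?thesis
      proof (cases "Suc i = length p")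
        case True then have "i = length p - 1" by simp
        then have "x = last p" using i \<open>p \<noteq> []\<close> by (simp add: last_conv_nth)
        then show ?thesis by simp
      next
        case F2: False
        then have "x \<in> interior p" using interior_conv[OF assms] i False by auto
        then show ?thesis by simp
      qed
    qed
  qed
next
  have "p \<noteq> []" using assms by auto
  moreover have "interior p \<subseteq> set p" unfolding interior_def
    by (metis in_set_butlastD list.set_sel(2) subsetI tl_Nil empty_iff list.set(1))
  ultimately show "{hd p, last p} \<union> interior p \<subseteq> set p" by auto
qed

lemma path_edges_conv: "e \<in> path_edges p \<longleftrightarrow> (\<exists>i. Suc i < length p \<and> e = {p!i, p!Suc i})"
  unfolding path_edges_def by blast

locale subdiv =
  fixes VH :: "'b set" and EH :: "'b set set" and VG :: "'a set" and EG :: "'a set set"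
    and f :: "'b \<Rightarrow> 'a" and P :: "'b set \<Rightarrow> 'a list"
  assumes sg: "simple_graph VH EH" and inj: "inj_on f VH"
    and Pe: "\<And>e. e\<in>EH \<Longrightarrow> distinct (P e) \<and> length (P e) \<ge> 3 \<and> {hd (P e), last (P e)} = f ` e \<and> interior (P e) \<inter> f ` VH = {}"
    and Pd: "\<And>e e'. e\<in>EH \<Longrightarrow> e'\<in>EH \<Longrightarrow> e \<noteq> e' \<Longrightarrow> interior (P e) \<inter> interior (P e') = {}"
    and VGd: "VG = f ` VH \<union> (\<Union>e\<in>EH. interior (P e))"
    and EGd: "EG = (\<Union>e\<in>EH. path_edges (P e))"
begin

definition R where "R W = f ` W \<union> (\<Union>e\<in>{e\<in>EH. e \<subseteq> W}. interior (P e))"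

lemma finVH: "finite VH" using sg by (simp add: simple_graph_def)

lemma wfH: "wf2 EH" using sg unfolding simple_graph_def wf2_def by blast

lemma EHsub: "e \<in> EH \<Longrightarrow> e \<subseteq> VH"
proof -
  assume "e \<in> EH"
  then obtain u v where "e = {u,v}" "u \<in> VH" "v \<in> VH" using sg unfolding simple_graph_def by blast
  then show "e \<subseteq> VH" by simp
qed

lemma finEH: "finite EH"
proof -
  have "EH \<subseteq> Pow VH" using EHsub by blast
  then show ?thesis using finVH finite_subset by blast
qed

lemma Pe_dist: "e \<in> EH \<Longrightarrow> distinct (P e)" using Pe by blast
lemma Pe_len: "e \<in> EH \<Longrightarrow> 3 \<le> length (P e)" using Pe by blast
lemma Pe_ends: "e \<in> EH \<Longrightarrow> {hd (P e), last (P e)} = f ` e" using Pe by blast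
lemma Pe_int: "e \<in> EH \<Longrightarrow> interior (P e) \<inter> f ` VH = {}" using Pe by blast

lemma wfG: "wf2 EG"
  unfolding wf2_def
proof
  fix e assume "e \<in> EG"
  then obtain e' where e': "e' \<in> EH" "e \<in> path_edges (P e')" unfolding EGd by blast
  then obtain i where i: "Suc i < length (P e')" "e = {P e'!i, P e'!Suc i}" unfolding path_edges_conv by blast
  have "P e'!i \<noteq> P e'!Suc i" using Pe_dist[OF e'(1)] i by (simp add: nth_eq_iff_index_eq)
  then show "\<exists>u v. u \<noteq> v \<and> e = {u, v}" using i by blast
qed

lemma setP: "e \<in> EH \<Longrightarrow> set (P e) = f ` e \<union> interior (P e)"
  using set_hd_last_interior[of "P e"] Pe_len[of e] Pe_ends[of e] by simp

lemma R_mono: "A \<subseteq> B \<Longrightarrow> R A \<subseteq> R B"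
  unfolding R_def by blast

lemma R_VG: "W \<subseteq> VH \<Longrightarrow> R W \<subseteq> VG"
  unfolding R_def VGd by blast

lemma finite_R: "W \<subseteq> VH \<Longrightarrow> finite (R W)"
proof -
  assume W: "W \<subseteq> VH"
  have "finite (f ` W)" using W finVH finite_subset by blast
  moreover have "finite {e\<in>EH. e \<subseteq> W}" using finEH by simp
  moreover have "\<And>e. finite (interior (P e))" unfolding interior_def by simp
  ultimately show ?thesis unfolding R_def by blast
qed

lemma setP_R: "e \<in> EH \<Longrightarrow> e \<subseteq> W \<Longrightarrow> set (P e) \<subseteq> R W"
  using setP[of e] unfolding R_def by blast

lemma int_R:
  assumes e: "e \<in> EH" and x: "x \<in> interior (P e)" "x \<in> R A" and A: "A \<subseteq> VH"
  shows "e \<subseteq> A"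
proof -
  have "x \<notin> f ` VH" using Pe_int[OF e] x by blast
  then have "x \<notin> f ` A" using A by blast
  then obtain e' where e': "e' \<in> EH" "e' \<subseteq> A" "x \<in> interior (P e')" using x(2) unfolding R_def by blast
  have "e = e'"
  proof (rule ccontr)
    assume "e \<noteq> e'"
    then have "interior (P e) \<inter> interior (P e') = {}" using Pd e e'(1) by blast
    then show False using x(1) e'(3) by blast
  qed
  then show ?thesis using e' by simp
qed

lemma edge_nonempty: "e \<in> EH \<Longrightarrow> e \<noteq> {}"
proof
  assume "e \<in> EH" "e = {}"
  then obtain u v where "e = {u,v}" using wfH unfolding wf2_def by blast
  then show False using \<open>e = {}\<close> by simp
qed

lemma R_disj:
  assumes A: "A \<subseteq> VH" and B: "B \<subseteq> VH" and AB: "A \<inter> B = {}"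
  shows "R A \<inter> R B = {}"
proof (rule ccontr)
  assume "R A \<inter> R B \<noteq> {}"
  then obtain x where xA: "x \<in> R A" and xB: "x \<in> R B" by blast
  show False
  proof (cases "x \<in> f ` A")
    case True
    then obtain a where a: "a \<in> A" "x = f a" by blast
    show False
    proof (cases "x \<in> f ` B")
      case True
      then obtain b where b: "b \<in> B" "x = f b" by blast
      have "a = b" using inj a b A B unfolding inj_on_def by blast
      then show False using a b AB by blast
    next
      case False
      then obtain e where e: "e \<in> EH" "x \<in> interior (P e)" using xB unfolding R_def by blast
      have "x \<in> f ` VH" using a A by blast
      then show False using Pe_int[OF e(1)] e(2) by blast
    qed
  next
    case False
    then obtain e where e: "e \<in> EH" "e \<subseteq> A" "x \<in> interior (P e)" using xA unfolding R_def by blast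
    have "e \<subseteq> B" using int_R[OF e(1) e(3) xB B] .
    then have "e = {}" using e(2) AB by blast
    then show False using edge_nonempty e(1) by blast
  qed
qed

lemma edge_int:
  assumes e: "e \<in> EH" and i: "Suc i < length (P e)"
  shows "P e!i \<in> interior (P e) \<or> P e!Suc i \<in> interior (P e)"
proof -
  have L: "2 \<le> length (P e)" "3 \<le> length (P e)" using Pe_len[OF e] by auto
  show ?thesis
  proof (cases "i = 0")
    case True
    then have "P e!Suc i \<in> interior (P e)" using interior_conv[OF L(1)] L(2) by auto
    then show ?thesis by simp
  next
    case False
    then have "P e!i \<in> interior (P e)" using interior_conv[OF L(1)] i by auto
    then show ?thesis by simp
  qed
qed

lemma half:
  assumes A: "A \<subseteq> VH" and B: "B \<subseteq> VH" and AB: "A \<inter> B = {}" and e: "e \<in> EH"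
    and u: "u \<in> interior (P e)" "u \<in> R A" and v: "v \<in> set (P e)" "v \<in> R B"
  shows False
proof -
  have eA: "e \<subseteq> A" using int_R[OF e u(1) u(2) A] .
  show False
  proof (cases "v \<in> interior (P e)")
    case True
    have "e \<subseteq> B" using int_R[OF e True v(2) B] .
    then have "e = {}" using eA AB by blast
    then show False using edge_nonempty e by blast
  next
    case False
    then have "v \<in> f ` e" using setP[OF e] v(1) by blast
    then have "v \<in> R A" using eA unfolding R_def by blast
    then show False using R_disj[OF A B AB] v(2) by blast
  qed
qed

lemma nonadj:
  assumes A: "A \<subseteq> VH" and B: "B \<subseteq> VH" and AB: "A \<inter> B = {}"
    and u: "u \<in> R A" and v: "v \<in> R B"
  shows "{u,v} \<notin> EG"
proof
  assume "{u,v} \<in> EG"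
  then obtain e where e: "e \<in> EH" "{u,v} \<in> path_edges (P e)" unfolding EGd by blast
  then obtain i where i: "Suc i < length (P e)" "{u,v} = {P e!i, P e!Suc i}"
    unfolding path_edges_conv by blast
  have s: "{P e!i, P e!Suc i} \<subseteq> set (P e)" using i(1) by simp
  have "{u,v} \<subseteq> set (P e)" using s i(2) by simp
  then have uv: "u \<in> set (P e)" "v \<in> set (P e)" by simp_all
  have "u \<in> interior (P e) \<or> v \<in> interior (P e)"
    using edge_int[OF e(1) i(1)] i(2) by (auto simp: doubleton_eq_iff)
  then show False
  proof
    assume "u \<in> interior (P e)"
    then show False using half[OF A B AB e(1) _ u uv(2) v] by blast
  next
    assume "v \<in> interior (P e)"
    moreover have "B \<inter> A = {}" using AB by blast
    ultimately show False using half[OF B A _ e(1) _ v uv(1) u] by blast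
  qed
qed

end



context subdiv begin

lemma NB:
  assumes e: "e \<in> EH" and x: "x \<in> e"
  shows "\<exists>n\<in>interior (P e). {f x, n} \<in> EG"
proof -
  define p where "p = P e"
  define L where "L = length p"
  have L3: "3 \<le> L" using Pe_len[OF e] unfolding L_def p_def .
  have L2: "2 \<le> length p" using L3 L_def by simp
  have pne: "p \<noteq> []" using L3 L_def by auto
  have "f x \<in> {hd p, last p}" using Pe_ends[OF e] x unfolding p_def by blast
  then have fx: "f x = p!0 \<or> f x = p!(L - 1)" using pne unfolding L_def by (auto simp: hd_conv_nth last_conv_nth)
  have inEG: "\<And>i. Suc i < L \<Longrightarrow> {p!i, p!Suc i} \<in> EG"
  proof -
    fix i assume "Suc i < L"
    then have "{p!i, p!Suc i} \<in> path_edges (P e)" unfolding path_edges_conv p_def L_def by blast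
    then show "{p!i, p!Suc i} \<in> EG" unfolding EGd using e by blast
  qed
  show ?thesis
  proof (cases "f x = p!0")
    case True
    have "0 < (1::nat)" "Suc 1 < length p" using L3 L_def by auto
    then have "\<exists>i. 0 < i \<and> Suc i < length p \<and> p!1 = p!i" by blast
    then have "p!1 \<in> interior p" using interior_conv[OF L2] by simp
    moreover have "{f x, p!1} \<in> EG" using inEG[of 0] True L3 by simp
    ultimately show ?thesis unfolding p_def by blast
  next
    case False
    then have fx2: "f x = p!(L-1)" using fx by simp
    have "0 < L - 2" "Suc (L-2) < length p" using L3 L_def by auto
    then have "\<exists>i. 0 < i \<and> Suc i < length p \<and> p!(L-2) = p!i" by blast
    then have "p!(L-2) \<in> interior p" using interior_conv[OF L2] by simp
    moreover have "Suc (L - 2) = L - 1" using L3 by simp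
    then have "{p!(L-2), f x} \<in> EG" using inEG[of "L-2"] fx2 L3 by simp
    then have "{f x, p!(L-2)} \<in> EG" by (simp add: insert_commute)
    ultimately show ?thesis unfolding p_def by blast
  qed
qed

lemma edgeEG: "e \<in> EH \<Longrightarrow> Suc i < length (P e) \<Longrightarrow> {P e!i, P e!Suc i} \<in> EG"
proof -
  assume e: "e \<in> EH" and i: "Suc i < length (P e)"
  then have "{P e!i, P e!Suc i} \<in> path_edges (P e)" unfolding path_edges_conv by blast
  then show ?thesis unfolding EGd using e by blast
qed

lemma int_in_R: "e \<in> EH \<Longrightarrow> e \<subseteq> S \<Longrightarrow> n \<in> interior (P e) \<Longrightarrow> n \<in> R S"
proof -
  assume "e \<in> EH" "e \<subseteq> S" "n \<in> interior (P e)"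
  then have "e \<in> {e\<in>EH. e \<subseteq> S}" by simp
  then show "n \<in> R S" unfolding R_def using \<open>n \<in> interior (P e)\<close> by blast
qed

lemma deg2G:
  assumes S: "S \<subseteq> VH" "deg2 EH S"
  shows "deg2 EG (R S)"
  unfolding deg2_def
proof
  fix x assume x: "x \<in> R S"
  show "\<exists>y\<in>R S. \<exists>z\<in>R S. y \<noteq> z \<and> {x,y} \<in> EG \<and> {x,z} \<in> EG"
  proof (cases "x \<in> f ` S")
    case True
    then obtain s where s: "s \<in> S" "x = f s" by blast
    have "\<exists>y\<in>S. \<exists>z\<in>S. y \<noteq> z \<and> {s,y} \<in> EH \<and> {s,z} \<in> EH"
      using bspec[OF S(2)[unfolded deg2_def] s(1)] .
    then obtain y z where yz: "y \<in> S" "z \<in> S" "y \<noteq> z" "{s,y} \<in> EH" "{s,z} \<in> EH" by blast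
    obtain n1 where n1: "n1 \<in> interior (P {s,y})" "{f s, n1} \<in> EG" using NB[OF yz(4)] by auto
    obtain n2 where n2: "n2 \<in> interior (P {s,z})" "{f s, n2} \<in> EG" using NB[OF yz(5)] by auto
    have r1: "n1 \<in> R S" using int_in_R[OF yz(4) _ n1(1)] s yz by simp
    have r2: "n2 \<in> R S" using int_in_R[OF yz(5) _ n2(1)] s yz by simp
    have "{s,y} \<noteq> {s,z}"
    proof
      assume eq: "{s,y} = {s,z}"
      have "{s,s} \<notin> EH" using wfH wf2_irrefl by metis
      then have "y \<noteq> s" using yz(4) by auto
      then show False using eq yz(3) by (auto simp: doubleton_eq_iff)
    qed
    then have "interior (P {s,y}) \<inter> interior (P {s,z}) = {}" using Pd yz(4,5) by blast
    then have "n1 \<noteq> n2" using n1(1) n2(1) by blast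
    then show ?thesis using r1 r2 n1(2) n2(2) s(2) by blast
  next
    case False
    then obtain e where e: "e \<in> EH" "e \<subseteq> S" "x \<in> interior (P e)" using x unfolding R_def by blast
    have L3: "3 \<le> length (P e)" using Pe_len[OF e(1)] .
    then have L2: "2 \<le> length (P e)" by simp
    obtain i where i: "0 < i" "Suc i < length (P e)" "x = P e!i" using e(3) interior_conv[OF L2] by blast
    have d: "P e!(i-1) \<noteq> P e!Suc i" using Pe_dist[OF e(1)] i by (simp add: nth_eq_iff_index_eq)
    have "P e!(i-1) \<in> set (P e)" "P e!Suc i \<in> set (P e)" using i by simp_all
    then have r: "P e!(i-1) \<in> R S" "P e!Suc i \<in> R S" using setP_R[OF e(1,2)] by blast+
    have "{P e!(i-1), P e!Suc (i-1)} \<in> EG" using edgeEG[OF e(1), of "i-1"] i by simp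
    then have e1: "{x, P e!(i-1)} \<in> EG" using i by (simp add: insert_commute)
    have e2: "{x, P e!Suc i} \<in> EG" using edgeEG[OF e(1), of i] i by simp
    show ?thesis using r d e1 e2 by blast
  qed
qed

lemma cycle_edges_card:
  assumes "induced_cycle VH EH p"
  shows "card {e\<in>EH. e \<subseteq> set p} \<le> card (set p)"
proof -
  have A: "distinct p \<and> 3 \<le> length p \<and> set p \<subseteq> VH \<and>
     {e \<in> EH. e \<subseteq> set p} = {{p ! i, p ! (Suc i mod length p)} |i. i < length p}"
    using assms unfolding induced_cycle_def .
  then have d: "distinct p" by (rule conjunct1)
  from A have "{e\<in>EH. e \<subseteq> set p} = {{p ! i, p ! (Suc i mod length p)} |i. i < length p}"
    by (elim conjE)
  also have "\<dots> = (\<lambda>i. {p ! i, p ! (Suc i mod length p)}) ` {..<length p}" by auto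
  finally have eq2: "{e\<in>EH. e \<subseteq> set p} = (\<lambda>i. {p ! i, p ! (Suc i mod length p)}) ` {..<length p}" .
  have "card {e\<in>EH. e \<subseteq> set p} = card ((\<lambda>i. {p ! i, p ! (Suc i mod length p)}) ` {..<length p})"
    using eq2 by (rule arg_cong)
  also have "\<dots> \<le> card {..<length p}" by (rule card_image_le) simp
  finally show ?thesis using distinct_card[OF d] by simp
qed

lemma Xw_card:
  assumes w: "w \<notin> S" and bound: "card {y\<in>S. {w,y}\<in>EH} \<le> 3" and finS: "finite S"
  shows "card {e\<in>EH. w \<in> e \<and> e \<inter> S \<noteq> {}} \<le> 3"
proof -
  have sub: "{e\<in>EH. w \<in> e \<and> e \<inter> S \<noteq> {}} \<subseteq> (\<lambda>y. {w,y}) ` {y\<in>S. {w,y}\<in>EH}"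
  proof
    fix e assume e: "e \<in> {e\<in>EH. w \<in> e \<and> e \<inter> S \<noteq> {}}"
    then have eE: "e \<in> EH" and we: "w \<in> e" and eS: "e \<inter> S \<noteq> {}" by auto
    obtain u v where uv: "u \<noteq> v" "e = {u,v}" using wfH eE unfolding wf2_def by blast
    obtain y where y: "y \<in> e" "y \<in> S" using eS by blast
    have "y \<noteq> w" using y w by blast
    then have "e = {w,y}" using uv we y by auto
    then show "e \<in> (\<lambda>y. {w,y}) ` {y\<in>S. {w,y}\<in>EH}" using y eE by blast
  qed
  have "finite {y\<in>S. {w,y}\<in>EH}" using finS by simp
  then have "card {e\<in>EH. w \<in> e \<and> e \<inter> S \<noteq> {}} \<le> card {y\<in>S. {w,y}\<in>EH}"
    using sub by (meson card_image_le card_mono finite_imageI le_trans)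
  then show ?thesis using bound by linarith
qed

lemma main_ind:
  "W \<subseteq> VH \<Longrightarrow> 3 * k * card W \<le> card {e\<in>EH. e \<subseteq> W} \<Longrightarrow> (0 < k \<longrightarrow> 0 < card {e\<in>EH. e \<subseteq> W}) \<Longrightarrow>
   \<exists>C. (\<forall>i<k. induced_cycle VG EG (C i) \<and> set (C i) \<subseteq> R W) \<and>
       (\<forall>i<k. \<forall>j<k. i \<noteq> j \<longrightarrow> set (C i) \<inter> set (C j) = {} \<and>
            (\<forall>u\<in>set (C i). \<forall>v\<in>set (C j). {u,v} \<notin> EG))"
proof (induction k arbitrary: W)
  case 0
  show ?case by simp
next
  case (Suc k)
  have WV: "W \<subseteq> VH" using Suc.prems(1) .
  have finW: "finite W" using WV finVH finite_subset by blast
  have mpos: "0 < card {e\<in>EH. e \<subseteq> W}" using Suc.prems(3) by simp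
  have Wne: "W \<noteq> {}"
  proof
    assume "W = {}"
    then have "{e\<in>EH. e \<subseteq> W} = {}" using edge_nonempty by auto
    then have "card {e\<in>EH. e \<subseteq> W} = 0" by (simp only: card.empty)
    then show False using mpos by simp
  qed
  have "card W \<le> 3 * Suc k * card W" by simp
  then have cWE: "card W \<le> card {e\<in>EH. e \<subseteq> W}" using Suc.prems(2) by linarith
  obtain T where T: "T \<subseteq> W" "T \<noteq> {}" "deg2 EH T" using peel[OF wfH finW Wne cWE] by blast
  obtain pS where pS: "induced_cycle VH EH pS" "set pS \<subseteq> W" "deg2 EH (set pS)"
    and out: "\<forall>w\<in>W - set pS. card {y\<in>set pS. {w,y}\<in>EH} \<le> 3"
    using gen_cycle[OF wfH finW WV T] by blast
  define S where "S = set pS"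
  have SW: "S \<subseteq> W" and SV: "S \<subseteq> VH" using pS WV unfolding S_def by auto
  have finS: "finite S" unfolding S_def by simp
  have Sne: "S \<noteq> {}" using pS unfolding S_def induced_cycle_def by auto
  have RSne: "R S \<noteq> {}" using Sne unfolding R_def by blast
  obtain c0 where c0: "induced_cycle VG EG c0" "set c0 \<subseteq> R S"
    using gen_cycle[OF wfG finite_R[OF SV] R_VG[OF SV] subset_refl RSne deg2G[OF SV pS(3)[folded S_def]]]
    by blast
  define W' where "W' = W - S"
  define X where "X w = {e\<in>EH. w \<in> e \<and> e \<inter> S \<noteq> {}}" for w
  have W'V: "W' \<subseteq> VH" using WV unfolding W'_def by blast
  have finW': "finite W'" using finW unfolding W'_def by simp
  have cover: "{e\<in>EH. e \<subseteq> W} \<subseteq> ({e\<in>EH. e \<subseteq> W'} \<union> {e\<in>EH. e \<subseteq> S}) \<union> (\<Union>w\<in>W'. X w)"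
  proof
    fix e assume e: "e \<in> {e\<in>EH. e \<subseteq> W}"
    then have eE: "e \<in> EH" and eW: "e \<subseteq> W" by auto
    show "e \<in> ({e\<in>EH. e \<subseteq> W'} \<union> {e\<in>EH. e \<subseteq> S}) \<union> (\<Union>w\<in>W'. X w)"
    proof (cases "e \<subseteq> W' \<or> e \<subseteq> S")
      case True then show ?thesis using eE by blast
    next
      case False
      then obtain a b where ab: "a \<in> e" "a \<notin> W'" "b \<in> e" "b \<notin> S" by blast
      then have "a \<in> S" "b \<in> W'" using eW unfolding W'_def by auto
      then have "e \<in> X b" unfolding X_def using eE ab by blast
      then show ?thesis using \<open>b \<in> W'\<close> by blast
    qed
  qed
  have finP: "finite (Pow VH)" using finVH by simp
  have fin1: "finite {e\<in>EH. e \<subseteq> W'}" "finite {e\<in>EH. e \<subseteq> S}" using finEH by simp_all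
  have finX: "\<And>w. finite (X w)" unfolding X_def using finEH by simp
  have finU: "finite (\<Union>w\<in>W'. X w)" using finW' finX by blast
  have Xb: "\<And>w. w \<in> W' \<Longrightarrow> card (X w) \<le> 3"
  proof -
    fix w assume w: "w \<in> W'"
    then have "w \<in> W - set pS" unfolding W'_def S_def .
    then have "card {y\<in>S. {w,y}\<in>EH} \<le> 3" using out unfolding S_def by blast
    moreover have "w \<notin> S" using w unfolding W'_def by blast
    ultimately show "card (X w) \<le> 3" unfolding X_def using Xw_card finS by blast
  qed
  have sumb: "(\<Sum>w\<in>W'. card (X w)) \<le> card W' * 3"
    using sum_bounded_above[of W' "\<lambda>w. card (X w)" 3, OF Xb] by simp
  have "card {e\<in>EH. e \<subseteq> W} \<le> card (({e\<in>EH. e \<subseteq> W'} \<union> {e\<in>EH. e \<subseteq> S}) \<union> (\<Union>w\<in>W'. X w))"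
    using cover fin1 finU by (intro card_mono) auto
  also have "\<dots> \<le> card ({e\<in>EH. e \<subseteq> W'} \<union> {e\<in>EH. e \<subseteq> S}) + card (\<Union>w\<in>W'. X w)"
    by (rule card_Un_le)
  also have "card ({e\<in>EH. e \<subseteq> W'} \<union> {e\<in>EH. e \<subseteq> S}) \<le> card {e\<in>EH. e \<subseteq> W'} + card {e\<in>EH. e \<subseteq> S}"
    by (rule card_Un_le)
  also have "card {e\<in>EH. e \<subseteq> S} \<le> card S" using cycle_edges_card[OF pS(1)] unfolding S_def .
  also have "card (\<Union>w\<in>W'. X w) \<le> (\<Sum>w\<in>W'. card (X w))" using card_UN_le[OF finW'] .
  also have "(\<Sum>w\<in>W'. card (X w)) \<le> card W' * 3" by (rule sumb)
  finally have cnt: "card {e\<in>EH. e \<subseteq> W} \<le> card {e\<in>EH. e \<subseteq> W'} + card S + card W' * 3" by simp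
  have cW: "card W = card S + card W'" unfolding W'_def using SW finW
    by (metis card_Diff_subset finS le_add_diff_inverse card_mono)
  have "3 * Suc k * card W = 3 * k * card W + 3 * card W" by (simp add: algebra_simps)
  then have E': "3 * k * card W \<le> card {e\<in>EH. e \<subseteq> W'}"
    using cnt cW Suc.prems(2) by linarith
  have "card W' \<le> card W" using cW by simp
  then have "3 * k * card W' \<le> 3 * k * card W" by simp
  then have E'2: "3 * k * card W' \<le> card {e\<in>EH. e \<subseteq> W'}" using E' by linarith
  have E'3: "0 < k \<longrightarrow> 0 < card {e\<in>EH. e \<subseteq> W'}"
  proof
    assume k: "0 < k"
    have "0 < card W" using finW Wne by (simp add: card_gt_0_iff)
    then have "0 < 3 * k * card W" using k by simp
    then show "0 < card {e\<in>EH. e \<subseteq> W'}" using E' by linarith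
  qed
  obtain C where C: "\<forall>i<k. induced_cycle VG EG (C i) \<and> set (C i) \<subseteq> R W'"
    and Cd: "\<forall>i<k. \<forall>j<k. i \<noteq> j \<longrightarrow> set (C i) \<inter> set (C j) = {} \<and>
            (\<forall>u\<in>set (C i). \<forall>v\<in>set (C j). {u,v} \<notin> EG)"
    using Suc.IH[OF W'V E'2 E'3] by blast
  define C' where "C' i = (if i < k then C i else c0)" for i
  have disjWS: "W' \<inter> S = {}" "S \<inter> W' = {}" unfolding W'_def by auto
  have RW'W: "R W' \<subseteq> R W" using R_mono unfolding W'_def by blast
  have RSW: "R S \<subseteq> R W" using R_mono SW by blast
  have P1: "\<forall>i<Suc k. induced_cycle VG EG (C' i) \<and> set (C' i) \<subseteq> R W"
  proof (intro allI impI)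
    fix i assume i: "i < Suc k"
    show "induced_cycle VG EG (C' i) \<and> set (C' i) \<subseteq> R W"
    proof (cases "i < k")
      case True then show ?thesis using C RW'W unfolding C'_def by auto
    next
      case False then show ?thesis using c0 RSW unfolding C'_def by auto
    qed
  qed
  have P2: "\<forall>i<Suc k. \<forall>j<Suc k. i \<noteq> j \<longrightarrow> set (C' i) \<inter> set (C' j) = {} \<and>
            (\<forall>u\<in>set (C' i). \<forall>v\<in>set (C' j). {u,v} \<notin> EG)"
  proof (intro allI impI)
    fix i j assume ij: "i < Suc k" "j < Suc k" "i \<noteq> j"
    show "set (C' i) \<inter> set (C' j) = {} \<and> (\<forall>u\<in>set (C' i). \<forall>v\<in>set (C' j). {u,v} \<notin> EG)"
    proof (cases "i < k")
      case ik: True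
      show ?thesis
      proof (cases "j < k")
        case True then show ?thesis using Cd ik ij unfolding C'_def by simp
      next
        case False
        have a: "set (C' i) \<subseteq> R W'" using C ik unfolding C'_def by simp
        have b: "set (C' j) \<subseteq> R S" using c0 False unfolding C'_def by simp
        have "set (C' i) \<inter> set (C' j) = {}" using R_disj[OF W'V SV disjWS(1)] a b by blast
        moreover have "\<forall>u\<in>set (C' i). \<forall>v\<in>set (C' j). {u,v} \<notin> EG"
          using nonadj[OF W'V SV disjWS(1)] a b by blast
        ultimately show ?thesis by blast
      qed
    next
      case ik: False
      then have "j < k" using ij by simp
      have a: "set (C' j) \<subseteq> R W'" using C \<open>j < k\<close> unfolding C'_def by simp
      have b: "set (C' i) \<subseteq> R S" using c0 ik unfolding C'_def by simp
      have "set (C' i) \<inter> set (C' j) = {}" using R_disj[OF SV W'V disjWS(2)] a b by blast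
      moreover have "\<forall>u\<in>set (C' i). \<forall>v\<in>set (C' j). {u,v} \<notin> EG"
        using nonadj[OF SV W'V disjWS(2)] a b by blast
      ultimately show ?thesis by blast
    qed
  qed
  show ?case using P1 P2 by blast
qed

end



theorem mainTheorem12:
  shows "\<exists>c::real > 0. \<forall>k::nat. k \<ge> 2 \<longrightarrow>
    (\<forall>(VH :: nat set) EH (VG :: nat set) EG.
       simple_graph VH EH \<longrightarrow>
       avg_degree VH EH \<ge> c * real k * ln (real k) \<longrightarrow>
       strict_subdivision VG EG VH EH \<longrightarrow>
       \<not> O_free k VG EG)"
proof -
  have l2: "ln (2::real) > 0" by simp
  have cpos: "6 / ln (2::real) > 0" using l2 by simp
  have main: "\<not> O_free k VG EG"
    if k: "2 \<le> k" and sg: "simple_graph VH EH"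
      and avg: "avg_degree VH EH \<ge> 6 / ln 2 * real k * ln (real k)"
      and ss: "strict_subdivision VG EG VH EH"
    for k :: nat and VH :: "nat set" and EH and VG :: "nat set" and EG
  proof -
    obtain f P where H: "inj_on f VH"
        "\<forall>e\<in>EH. distinct (P e) \<and> length (P e) \<ge> 3 \<and> {hd (P e), last (P e)} = f ` e \<and> interior (P e) \<inter> f ` VH = {}"
        "\<forall>e\<in>EH. \<forall>e'\<in>EH. e \<noteq> e' \<longrightarrow> interior (P e) \<inter> interior (P e') = {}"
        "VG = f ` VH \<union> (\<Union>e\<in>EH. interior (P e))"
        "EG = (\<Union>e\<in>EH. path_edges (P e))"
      using ss unfolding strict_subdivision_def by (elim exE conjE) blast
    interpret subdiv VH EH VG EG f P
    proof
      show "simple_graph VH EH" by (rule sg)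
      show "inj_on f VH" by (rule H(1))
      show "\<And>e. e \<in> EH \<Longrightarrow> distinct (P e) \<and> 3 \<le> length (P e) \<and> {hd (P e), last (P e)} = f ` e \<and> interior (P e) \<inter> f ` VH = {}"
        using H(2) by blast
      show "\<And>e e'. e \<in> EH \<Longrightarrow> e' \<in> EH \<Longrightarrow> e \<noteq> e' \<Longrightarrow> interior (P e) \<inter> interior (P e') = {}"
        using H(3) by blast
      show "VG = f ` VH \<union> (\<Union>e\<in>EH. interior (P e))" by (rule H(4))
      show "EG = (\<Union>e\<in>EH. path_edges (P e))" by (rule H(5))
    qed
    have kr: "real k \<ge> 2" using k by simp
    have "ln 2 \<le> ln (real k)" using kr by simp
    then have "6 / ln 2 * real k * ln 2 \<le> 6 / ln 2 * real k * ln (real k)"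
      using cpos kr by (intro mult_left_mono) auto
    moreover have "6 / ln 2 * real k * ln 2 = 6 * real k" using l2 by simp
    ultimately have "6 * real k \<le> avg_degree VH EH" using avg by linarith
    then have A: "6 * real k \<le> 2 * real (card EH) / real (card VH)" unfolding avg_degree_def .
    have npos: "card VH > 0"
    proof (rule ccontr)
      assume "\<not> card VH > 0"
      then have "card VH = 0" by simp
      then show False using A kr by simp
    qed
    then have "6 * real k * real (card VH) \<le> 2 * real (card EH)" using A by (simp add: pos_le_divide_eq)
    then have "real (3 * k * card VH) \<le> real (card EH)" by simp
    then have m: "3 * k * card VH \<le> card EH" by (simp only: of_nat_le_iff)
    have EHeq: "{e\<in>EH. e \<subseteq> VH} = EH" using EHsub by blast
    have m1: "3 * k * card VH \<le> card {e\<in>EH. e \<subseteq> VH}" using m EHeq by simp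
    have "0 < 3 * k * card VH" using npos k by simp
    then have m2: "0 < k \<longrightarrow> 0 < card {e\<in>EH. e \<subseteq> VH}" using m1 by linarith
    obtain C where C: "\<forall>i<k. induced_cycle VG EG (C i) \<and> set (C i) \<subseteq> R VH"
      and Cd: "\<forall>i<k. \<forall>j<k. i \<noteq> j \<longrightarrow> set (C i) \<inter> set (C j) = {} \<and>
            (\<forall>u\<in>set (C i). \<forall>v\<in>set (C j). {u,v} \<notin> EG)"
      using main_ind[OF subset_refl m1 m2] by blast
    have "has_induced_k_cycles k VG EG" unfolding has_induced_k_cycles_def
      using C Cd by blast
    then show ?thesis unfolding O_free_def by simp
  qed
  show ?thesis using cpos main by blast
qed


end
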